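(* Let $(X,d)$ be a Hadamard space and let $S,T:\ell^\infty(\mathbb Z^s,X)\to\ell^\infty(\mathbb Z^s,X)$ be maps. Suppose: (i) there are a function $D:\ell^\infty(\mathbb Z^s,X)\to\mathbb R_{\ge0}$, a real $0\le\gamma<1$ and a positive integer $n_0$ with $D(S^nx)\le\gamma^{\lfloor n/n_0\rfloor}D(x)$ for all $x\in\ell^\infty(\mathbb Z^s,X)$ and $n\in\mathbb N$; (ii) $T$ is convergent and $d_\infty(Tx,Ty)\le d_\infty(x,y)$ for all $x,y\in\ell^\infty(\mathbb Z^s,X)$; (iii) there is $C\ge0$ with $d_\infty(Sx,Tx)\le C\,D(x)$ for all $x\in\ell^\infty(\mathbb Z^s,X)$. Then $S$ is convergent.
   Context: Hadamard space: complete metric space $(X,d)$ such that for any $x_0,x_1\in X$ there is $y$ with $d(z,y)^2\le\frac12d(z,x_0)^2+\frac12d(z,x_1)^2-\frac14d(x_0,x_1)^2$ for all $z$. $d_\infty(x,y)=\sup_{j\in\mathbb Z^s}d(x_j,y_j)$. A map $S:\ell^\infty(\mathbb Z^s,X)\to\ell^\infty(\mathbb Z^s,X)$ is convergent if for every $x$ there is a continuous $S^\infty x:\mathbb R^s\to X$ with $\sup_{j}d(S^\infty x(j/2^n),(S^nx)_j)\to0$ as $n\to\infty$. *)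

theory Defs
  imports "HOL-Analysis.Analysis"
begin

definition hadamard_space :: "'a::metric_space set \<Rightarrow> bool" where
  "hadamard_space X \<longleftrightarrow> complete X \<and>
     (\<forall>x0\<in>X. \<forall>x1\<in>X. \<exists>y\<in>X. \<forall>z\<in>X.
        (dist z y)\<^sup>2 \<le> (dist z x0)\<^sup>2 / 2 + (dist z x1)\<^sup>2 / 2 - (dist x0 x1)\<^sup>2 / 4)"

definition linf :: "(int ^ 's \<Rightarrow> 'a::metric_space) set" where
  "linf = {x. bounded (range x)}"

definition dinf :: "(int ^ 's \<Rightarrow> 'a::metric_space) \<Rightarrow> (int ^ 's \<Rightarrow> 'a) \<Rightarrow> real" where
  "dinf x y = (SUP j. dist (x j) (y j))"

definition maps_linf :: "((int ^ 's \<Rightarrow> 'a::metric_space) \<Rightarrow> (int ^ 's \<Rightarrow> 'a)) \<Rightarrow> bool" where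
  "maps_linf S \<longleftrightarrow> (\<forall>x\<in>linf. S x \<in> linf)"

definition dyadic :: "nat \<Rightarrow> int ^ 's \<Rightarrow> real ^ 's" where
  "dyadic n j = (\<chi> i. real_of_int (j $ i) / 2 ^ n)"

text \<open>Convergence of a subdivision-type map: the supremum over j of the
  distances tends to 0 (written out with epsilon, i.e. uniformly in j).\<close>
definition convergent_scheme :: "((int ^ 's \<Rightarrow> 'a::metric_space) \<Rightarrow> (int ^ 's \<Rightarrow> 'a)) \<Rightarrow> bool" where
  "convergent_scheme S \<longleftrightarrow> (\<forall>x\<in>linf. \<exists>f :: real ^ 's \<Rightarrow> 'a. continuous_on UNIV f \<and>
     (\<forall>e>0. \<exists>N. \<forall>n\<ge>N. \<forall>j. dist (f (dyadic n j)) ((S ^^ n) x j) \<le> e))"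

end

theory Submission
  imports Defs
begin

lemma linf_bdd:
  assumes "x \<in> linf" "y \<in> linf"
  shows "bdd_above (range (\<lambda>j. dist (x j) (y j)))"
proof -
  obtain a e where a: "\<forall>z\<in>range x. dist a z \<le> e" using assms(1) unfolding linf_def bounded_def by blast
  obtain b f where b: "\<forall>z\<in>range y. dist b z \<le> f" using assms(2) unfolding linf_def bounded_def by blast
  have "dist (x j) (y j) \<le> e + dist a b + f" for j
  proof -
    have "dist (x j) (y j) \<le> dist (x j) a + dist a b + dist b (y j)"
      using dist_triangle[of "x j" "y j" a] dist_triangle[of a "y j" b] by linarith
    also have "\<dots> \<le> e + dist a b + f" using a b by (simp add: dist_commute add_mono)
    finally show ?thesis .
  qed
  then show ?thesis by (intro bdd_aboveI) auto
qed

lemma dinf_ge: "x \<in> linf \<Longrightarrow> y \<in> linf \<Longrightarrow> dist (x j) (y j) \<le> dinf x y"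
  unfolding dinf_def by (rule cSUP_upper[OF _ linf_bdd]) auto

lemma dinf_le: "(\<And>j. dist (x j) (y j) \<le> B) \<Longrightarrow> dinf x y \<le> B"
  unfolding dinf_def by (rule cSUP_least) auto

lemma dinf_tri:
  assumes "x \<in> linf" "y \<in> linf" "z \<in> linf"
  shows "dinf x z \<le> dinf x y + dinf y z"
proof (rule dinf_le)
  fix j
  have "dist (x j) (z j) \<le> dist (x j) (y j) + dist (y j) (z j)" by (rule dist_triangle)
  also have "\<dots> \<le> dinf x y + dinf y z" using assms by (intro add_mono dinf_ge) auto
  finally show "dist (x j) (z j) \<le> dinf x y + dinf y z" .
qed

lemma funpow_linf: "maps_linf S \<Longrightarrow> x \<in> linf \<Longrightarrow> (S ^^ n) x \<in> linf"
  by (induction n) (auto simp: maps_linf_def)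

lemma funpow_nonexp:
  assumes "maps_linf T" "\<forall>x\<in>linf. \<forall>y\<in>linf. dinf (T x) (T y) \<le> dinf x y"
  shows "x \<in> linf \<Longrightarrow> y \<in> linf \<Longrightarrow> dinf ((T ^^ m) x) ((T ^^ m) y) \<le> dinf x y"
proof (induction m)
  case 0
  then show ?case by simp
next
  case (Suc m)
  have "dinf ((T ^^ Suc m) x) ((T ^^ Suc m) y) \<le> dinf ((T ^^ m) x) ((T ^^ m) y)"
    using assms Suc.prems funpow_linf[OF assms(1)] by simp
  then show ?case using Suc by linarith
qed

lemma telescope:
  assumes "maps_linf S" "maps_linf T"
    and "\<forall>x\<in>linf. \<forall>y\<in>linf. dinf (T x) (T y) \<le> dinf x y"
    and "\<forall>x\<in>linf. dinf (S x) (T x) \<le> C * D x"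
  shows "y \<in> linf \<Longrightarrow> dinf ((T ^^ m) y) ((S ^^ m) y) \<le> C * (\<Sum>i<m. D ((S ^^ i) y))"
proof (induction m arbitrary: y)
  case 0
  then show ?case by (simp add: dinf_def)
next
  case (Suc m)
  have Sy: "S y \<in> linf" "T y \<in> linf" using Suc.prems assms unfolding maps_linf_def by auto
  have "dinf ((T ^^ Suc m) y) ((S ^^ Suc m) y) = dinf ((T ^^ m) (T y)) ((S ^^ m) (S y))"
    by (simp only: funpow_Suc_right o_def)
  also have "\<dots> \<le> dinf ((T ^^ m) (T y)) ((T ^^ m) (S y)) + dinf ((T ^^ m) (S y)) ((S ^^ m) (S y))"
    using Sy by (intro dinf_tri funpow_linf[OF assms(1)] funpow_linf[OF assms(2)]) auto
  also have "\<dots> \<le> dinf (T y) (S y) + C * (\<Sum>i<m. D ((S ^^ i) (S y)))"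
    using Sy by (intro add_mono funpow_nonexp[OF assms(2,3)] Suc.IH) auto
  also have "dinf (T y) (S y) = dinf (S y) (T y)" unfolding dinf_def by (simp add: dist_commute)
  also have "(\<Sum>i<m. D ((S ^^ i) (S y))) = (\<Sum>i<m. D ((S ^^ Suc i) y))"
    by (simp only: funpow_Suc_right o_def)
  finally have X: "dinf ((T ^^ Suc m) y) ((S ^^ Suc m) y) \<le> C * D y + C * (\<Sum>i<m. D ((S ^^ Suc i) y))"
    using assms(4) Suc.prems by fastforce
  have eq: "(\<Sum>i<Suc m. D ((S ^^ i) y)) = D y + (\<Sum>i<m. D ((S ^^ Suc i) y))"
    by (simp only: sum.lessThan_Suc_shift funpow_0 id_apply)
  show ?case unfolding eq distrib_left by (rule X)
qed

lemma geom_bound: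
  fixes \<gamma> :: real
  assumes "0 \<le> \<gamma>" "\<gamma> < 1" "n0 > 0"
  shows "(\<Sum>i<m. \<gamma> ^ ((k + i) div n0)) \<le> \<gamma> ^ (k div n0) * (n0 / (1 - \<gamma>))"
proof -
  have "(\<Sum>i<m. \<gamma> ^ ((k + i) div n0)) \<le> (\<Sum>i<m. \<gamma> ^ (k div n0) * \<gamma> ^ (i div n0))"
  proof (rule sum_mono)
    fix i
    have "k div n0 + i div n0 \<le> (k + i) div n0" using div_add1_eq[of k i n0] by linarith
    then have "\<gamma> ^ ((k + i) div n0) \<le> \<gamma> ^ (k div n0 + i div n0)"
      using assms by (intro power_decreasing) auto
    then show "\<gamma> ^ ((k + i) div n0) \<le> \<gamma> ^ (k div n0) * \<gamma> ^ (i div n0)" by (simp add: power_add)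
  qed
  also have "\<dots> = \<gamma> ^ (k div n0) * (\<Sum>i<m. \<gamma> ^ (i div n0))" by (simp add: sum_distrib_left)
  also have "(\<Sum>i<m. \<gamma> ^ (i div n0)) \<le> n0 / (1 - \<gamma>)"
  proof -
    have "m \<le> m * n0" using assms by simp
    then have "(\<Sum>i<m. \<gamma> ^ (i div n0)) \<le> (\<Sum>i<m * n0. \<gamma> ^ (i div n0))"
      using assms by (intro sum_mono2) auto
    also have "\<dots> = (\<Sum>q<m. sum (\<lambda>i. \<gamma> ^ (i div n0)) {q * n0..<q * n0 + n0})"
      by (rule sum.nat_group[symmetric])
    also have "\<dots> = (\<Sum>q<m. n0 * \<gamma> ^ q)"
    proof (rule sum.cong[OF refl])
      fix q
      have "sum (\<lambda>i. \<gamma> ^ (i div n0)) {q * n0..<q * n0 + n0} = sum (\<lambda>i. \<gamma> ^ q) {q * n0..<q * n0 + n0}"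
      proof (rule sum.cong[OF refl])
        fix i assume "i \<in> {q * n0..<q * n0 + n0}"
        then have "n0 * q \<le> i" "i < n0 * Suc q" by (auto simp: mult.commute)
        then have "i div n0 = q" by (rule div_nat_eqI)
        then show "\<gamma> ^ (i div n0) = \<gamma> ^ q" by simp
      qed
      then show "sum (\<lambda>i. \<gamma> ^ (i div n0)) {q * n0..<q * n0 + n0} = n0 * \<gamma> ^ q" by simp
    qed
    also have "\<dots> = n0 * (\<Sum>q<m. \<gamma> ^ q)" by (simp add: sum_distrib_left)
    also have "(\<Sum>q<m. \<gamma> ^ q) \<le> 1 / (1 - \<gamma>)"
    proof -
      have "(\<Sum>q<m. \<gamma> ^ q) = (1 - \<gamma> ^ m) / (1 - \<gamma>)" using assms
        by (simp add: sum_gp_strict)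
      also have "\<dots> \<le> 1 / (1 - \<gamma>)" using assms by (intro divide_right_mono) auto
      finally show ?thesis .
    qed
    then have "n0 * (\<Sum>q<m. \<gamma> ^ q) \<le> n0 * (1 / (1 - \<gamma>))" by (intro mult_left_mono) auto
    finally show ?thesis by simp
  qed
  then have "\<gamma> ^ (k div n0) * (\<Sum>i<m. \<gamma> ^ (i div n0)) \<le> \<gamma> ^ (k div n0) * (n0 / (1 - \<gamma>))"
    using assms by (intro mult_left_mono) auto
  finally show ?thesis .
qed


lemma dyadic_scale:
  assumes "k \<le> n"
  shows "((2::real) ^ k) *\<^sub>R dyadic n j = dyadic (n - k) j"
proof -
  have "(2::real) ^ n = 2 ^ (n - k) * 2 ^ k" using assms by (simp add: power_add[symmetric])
  then show ?thesis by (simp add: dyadic_def vec_eq_iff field_simps)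
qed

lemma dyadic_refine:
  "dyadic n j = dyadic (n + q) (\<chi> i. 2 ^ q * j $ i)"
  by (simp add: dyadic_def vec_eq_iff power_add field_simps)

lemma dyadic_approx:
  fixes t :: "real ^ 's"
  shows "(\<lambda>n. dyadic n (\<chi> i. \<lfloor>2 ^ n * t $ i\<rfloor>)) \<longlonglongrightarrow> t"
proof (rule vec_tendstoI)
  fix i
  have l: "(\<lambda>n. t $ i - inverse (2 ^ n)) \<longlonglongrightarrow> t $ i - 0"
    by (intro tendsto_diff tendsto_const LIMSEQ_inverse_realpow_zero) simp
  show "(\<lambda>n. dyadic n (\<chi> i. \<lfloor>2 ^ n * t $ i\<rfloor>) $ i) \<longlonglongrightarrow> t $ i"
  proof (rule tendsto_sandwich[OF _ _ l[simplified] tendsto_const])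
    show "\<forall>\<^sub>F n in sequentially. t $ i - inverse (2 ^ n) \<le> dyadic n (\<chi> i. \<lfloor>2 ^ n * t $ i\<rfloor>) $ i"
    proof (intro always_eventually allI)
      fix n :: nat
      have "2 ^ n * t $ i - 1 \<le> real_of_int \<lfloor>2 ^ n * t $ i\<rfloor>" by linarith
      then have "(2 ^ n * t $ i - 1) / 2 ^ n \<le> real_of_int \<lfloor>2 ^ n * t $ i\<rfloor> / 2 ^ n"
        by (intro divide_right_mono) auto
      then show "t $ i - inverse (2 ^ n) \<le> dyadic n (\<chi> i. \<lfloor>2 ^ n * t $ i\<rfloor>) $ i"
        by (simp add: dyadic_def field_simps)
    qed
    show "\<forall>\<^sub>F n in sequentially. dyadic n (\<chi> i. \<lfloor>2 ^ n * t $ i\<rfloor>) $ i \<le> t $ i"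
    proof (intro always_eventually allI)
      fix n :: nat
      have "real_of_int \<lfloor>2 ^ n * t $ i\<rfloor> \<le> 2 ^ n * t $ i" by linarith
      then have "real_of_int \<lfloor>2 ^ n * t $ i\<rfloor> / 2 ^ n \<le> (2 ^ n * t $ i) / 2 ^ n"
        by (intro divide_right_mono) auto
      then show "dyadic n (\<chi> i. \<lfloor>2 ^ n * t $ i\<rfloor>) $ i \<le> t $ i"
        by (simp add: dyadic_def)
    qed
  qed
qed

lemma pow_div_tendsto:
  fixes \<gamma> :: real
  assumes "0 \<le> \<gamma>" "\<gamma> < 1" "n0 > 0"
  shows "(\<lambda>k. \<gamma> ^ (k div n0)) \<longlonglongrightarrow> 0"
proof (rule LIMSEQ_I)
  fix r :: real assume r: "0 < r"
  have "(\<lambda>n. \<gamma> ^ n) \<longlonglongrightarrow> 0" using assms by (intro LIMSEQ_power_zero) simp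
  from LIMSEQ_D[OF this r] obtain N0 where N0: "\<forall>n\<ge>N0. norm (\<gamma> ^ n - 0) < r" by blast
  show "\<exists>no. \<forall>k\<ge>no. norm (\<gamma> ^ (k div n0) - 0) < r"
  proof (intro exI allI impI)
    fix k assume "N0 * n0 \<le> k"
    then have "N0 * n0 div n0 \<le> k div n0" by (rule div_le_mono)
    then have "N0 \<le> k div n0" using assms by simp
    then show "norm (\<gamma> ^ (k div n0) - 0) < r" using N0 by blast
  qed
qed

theorem mainTheorem4:
  fixes S T :: "(int ^ 's \<Rightarrow> 'a::metric_space) \<Rightarrow> (int ^ 's \<Rightarrow> 'a)"
    and D :: "(int ^ 's \<Rightarrow> 'a) \<Rightarrow> real"
    and \<gamma> C :: real and n0 :: nat
  assumes "hadamard_space (UNIV :: 'a set)"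
    and "maps_linf S" and "maps_linf T"
    and "\<forall>x\<in>linf. D x \<ge> 0"
    and "0 \<le> \<gamma>" and "\<gamma> < 1" and "n0 > 0"
    and "\<forall>x\<in>linf. \<forall>n. D ((S ^^ n) x) \<le> \<gamma> ^ (n div n0) * D x"
    and "convergent_scheme T"
    and "\<forall>x\<in>linf. \<forall>y\<in>linf. dinf (T x) (T y) \<le> dinf x y"
    and "C \<ge> 0"
    and "\<forall>x\<in>linf. dinf (S x) (T x) \<le> C * D x"
  shows "convergent_scheme S"
  unfolding convergent_scheme_def
proof
  fix x :: "int ^ 's \<Rightarrow> 'a" assume x: "x \<in> linf"
  have compl: "complete (UNIV :: 'a set)" using assms(1) unfolding hadamard_space_def by blast
  have xsl: "(S ^^ k) x \<in> linf" for k using funpow_linf[OF assms(2) x] .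
  have TF: "\<forall>k. \<exists>f :: real ^ 's \<Rightarrow> 'a. continuous_on UNIV f \<and>
     (\<forall>e>0. \<exists>N. \<forall>n\<ge>N. \<forall>j. dist (f (dyadic n j)) ((T ^^ n) ((S ^^ k) x) j) \<le> e)"
    using assms(9) xsl unfolding convergent_scheme_def by blast
  from choice[OF TF] obtain F where F: "\<And>k. continuous_on UNIV (F k)"
    "\<And>k e. e > 0 \<Longrightarrow> \<exists>N. \<forall>n\<ge>N. \<forall>j. dist (F k (dyadic n j)) ((T ^^ n) ((S ^^ k) x) j) \<le> e"
    by blast
  define c where "c = C * D x * (n0 / (1 - \<gamma>))"
  define E where "E k = c * \<gamma> ^ (k div n0)" for k
  have Dx: "D x \<ge> 0" using assms(4) x by blast
  have c0: "c \<ge> 0" unfolding c_def using assms Dx by auto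
  have E0: "E k \<ge> 0" for k unfolding E_def using c0 assms by auto
  have Etend: "E \<longlonglongrightarrow> 0"
    unfolding E_def[abs_def] using pow_div_tendsto[OF assms(5,6,7)] by (intro tendsto_mult_right_zero)
  have Elim: "\<exists>K. \<forall>k\<ge>K. E k \<le> e" if "e > 0" for e
  proof -
    from LIMSEQ_D[OF Etend that] obtain K where "\<forall>k\<ge>K. norm (E k - 0) < e" by blast
    then show ?thesis by (intro exI[of _ K]) auto
  qed
  have est: "dinf ((T ^^ m) ((S ^^ k) x)) ((S ^^ (m + k)) x) \<le> E k" for m k
  proof -
    have "dinf ((T ^^ m) ((S ^^ k) x)) ((S ^^ m) ((S ^^ k) x)) \<le> C * (\<Sum>i<m. D ((S ^^ i) ((S ^^ k) x)))"
      by (rule telescope[OF assms(2,3,10,12) xsl])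
    also have "(\<Sum>i<m. D ((S ^^ i) ((S ^^ k) x))) \<le> (\<Sum>i<m. \<gamma> ^ ((k + i) div n0) * D x)"
    proof (rule sum_mono)
      fix i
      have "D ((S ^^ i) ((S ^^ k) x)) = D ((S ^^ (k + i)) x)" by (simp add: funpow_add add.commute)
      also have "\<dots> \<le> \<gamma> ^ ((k + i) div n0) * D x" using assms(8) x by blast
      finally show "D ((S ^^ i) ((S ^^ k) x)) \<le> \<gamma> ^ ((k + i) div n0) * D x" .
    qed
    also have "(\<Sum>i<m. \<gamma> ^ ((k + i) div n0) * D x) = (\<Sum>i<m. \<gamma> ^ ((k + i) div n0)) * D x"
      by (simp add: sum_distrib_right)
    also have "\<dots> \<le> \<gamma> ^ (k div n0) * (n0 / (1 - \<gamma>)) * D x"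
      using geom_bound[OF assms(5,6,7)] Dx by (intro mult_right_mono) auto
    finally have "dinf ((T ^^ m) ((S ^^ k) x)) ((S ^^ m) ((S ^^ k) x)) \<le> C * (\<gamma> ^ (k div n0) * (n0 / (1 - \<gamma>)) * D x)"
      using assms(11) by (meson mult_left_mono order_trans)
    moreover have "(S ^^ m) ((S ^^ k) x) = (S ^^ (m + k)) x" by (simp add: funpow_add)
    ultimately show ?thesis unfolding E_def c_def by (simp add: ac_simps)
  qed
  have estp: "dist ((T ^^ m) ((S ^^ k) x) j) ((S ^^ (m + k)) x j) \<le> E k" for m k j
    using est[of m k] dinf_ge[OF funpow_linf[OF assms(3) xsl] xsl] by (meson order_trans)
  define g where "g k t = F k (((2::real) ^ k) *\<^sub>R t)" for k t
  have gcont: "continuous_on UNIV (g k)" for k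
  proof -
    have "continuous_on UNIV (F k \<circ> (\<lambda>t. ((2::real) ^ k) *\<^sub>R t))"
      by (rule continuous_on_compose) (auto intro!: continuous_intros F(1) continuous_on_subset[OF F(1)])
    then show ?thesis unfolding g_def o_def .
  qed
  have gdy: "g k (dyadic n j) = F k (dyadic (n - k) j)" if "k \<le> n" for k n j
    unfolding g_def by (simp only: dyadic_scale[OF that])
  have L2: "\<exists>Q. \<forall>q\<ge>Q. dist (g k (dyadic n j)) ((S ^^ (n + q)) x (\<chi> i. 2 ^ q * j $ i)) \<le> E k + e"
    if kn: "k \<le> n" and e0: "e > 0" for k n j e
  proof -
    obtain N where N: "\<forall>n\<ge>N. \<forall>j. dist (F k (dyadic n j)) ((T ^^ n) ((S ^^ k) x) j) \<le> e"
      using F(2)[OF e0] by blast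
    show ?thesis
    proof (intro exI allI impI)
      fix q assume q: "N \<le> q"
      define J :: "int ^ 's" where "J = (\<chi> i. 2 ^ q * j $ i)"
      define p where "p = n - k + q"
      have eqg: "g k (dyadic n j) = F k (dyadic p J)"
        unfolding gdy[OF kn] p_def J_def by (rule arg_cong[OF dyadic_refine])
      have "dist (F k (dyadic p J)) ((T ^^ p) ((S ^^ k) x) J) \<le> e"
        using N q unfolding p_def by auto
      moreover have "dist ((T ^^ p) ((S ^^ k) x) J) ((S ^^ (n + q)) x J) \<le> E k"
        using estp[of p k J] kn unfolding p_def by simp
      ultimately show "dist (g k (dyadic n j)) ((S ^^ (n + q)) x (\<chi> i. 2 ^ q * j $ i)) \<le> E k + e"
        unfolding J_def[symmetric] eqg
        using dist_triangle[of "F k (dyadic p J)" "(S ^^ (n + q)) x J" "(T ^^ p) ((S ^^ k) x) J"]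
        by linarith
    qed
  qed
  have L3: "dist (g k (dyadic n j)) (g k' (dyadic n j)) \<le> E k + E k'"
    if kn: "k \<le> n" and kn': "k' \<le> n" for k k' n j
  proof (rule field_le_epsilon)
    fix e :: real assume e: "e > 0"
    obtain Q1 where Q1: "\<forall>q\<ge>Q1. dist (g k (dyadic n j)) ((S ^^ (n + q)) x (\<chi> i. 2 ^ q * j $ i)) \<le> E k + e / 2"
      using L2[OF kn, of "e/2"] e by auto
    obtain Q2 where Q2: "\<forall>q\<ge>Q2. dist (g k' (dyadic n j)) ((S ^^ (n + q)) x (\<chi> i. 2 ^ q * j $ i)) \<le> E k' + e / 2"
      using L2[OF kn', of "e/2"] e by auto
    define q where "q = max Q1 Q2"
    have "dist (g k (dyadic n j)) (g k' (dyadic n j)) \<le> dist (g k (dyadic n j)) ((S ^^ (n + q)) x (\<chi> i. 2 ^ q * j $ i))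
        + dist (g k' (dyadic n j)) ((S ^^ (n + q)) x (\<chi> i. 2 ^ q * j $ i))"
      using dist_triangle3[of "g k (dyadic n j)" "g k' (dyadic n j)" "(S ^^ (n + q)) x (\<chi> i. 2 ^ q * j $ i)"]
      by (simp add: dist_commute)
    also have "\<dots> \<le> (E k + e / 2) + (E k' + e / 2)"
      using Q1 Q2 unfolding q_def by (intro add_mono) auto
    finally show "dist (g k (dyadic n j)) (g k' (dyadic n j)) \<le> E k + E k' + e" by simp
  qed
  have L4: "dist (g k t) (g k' t) \<le> E k + E k'" for k k' t
  proof -
    define tn where "tn n = dyadic n (\<chi> i. \<lfloor>2 ^ n * t $ i\<rfloor>)" for n
    have tnl: "tn \<longlonglongrightarrow> t" unfolding tn_def[abs_def] by (rule dyadic_approx)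
    have "(\<lambda>n. g k (tn n)) \<longlonglongrightarrow> g k t"
      by (rule continuous_on_tendsto_compose[OF gcont tnl]) auto
    moreover have "(\<lambda>n. g k' (tn n)) \<longlonglongrightarrow> g k' t"
      by (rule continuous_on_tendsto_compose[OF gcont tnl]) auto
    ultimately have lim: "(\<lambda>n. dist (g k (tn n)) (g k' (tn n))) \<longlonglongrightarrow> dist (g k t) (g k' t)"
      by (rule tendsto_dist)
    show ?thesis
    proof (rule tendsto_upperbound[OF lim _ trivial_limit_sequentially])
      show "\<forall>\<^sub>F n in sequentially. dist (g k (tn n)) (g k' (tn n)) \<le> E k + E k'"
        unfolding eventually_sequentially tn_def
        by (intro exI[of _ "max k k'"] allI impI L3) auto
    qed
  qed
  have conv: "convergent (\<lambda>k. g k t)" for t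
  proof -
    have "Cauchy (\<lambda>k. g k t)"
    proof (rule metric_CauchyI)
      fix e :: real assume e: "e > 0"
      obtain K where K: "\<forall>k\<ge>K. E k \<le> e / 3" using Elim[of "e/3"] e by auto
      show "\<exists>M. \<forall>m\<ge>M. \<forall>n\<ge>M. dist (g m t) (g n t) < e"
      proof (intro exI allI impI)
        fix m n assume "K \<le> m" "K \<le> n"
        then have "E m + E n \<le> e / 3 + e / 3" using K by (intro add_mono) auto
        then show "dist (g m t) (g n t) < e" using L4[where k=m and k'=n and t=t] e by linarith
      qed
    qed
    then obtain l where "(\<lambda>k. g k t) \<longlonglongrightarrow> l" using compl unfolding complete_def by blast
    then show ?thesis unfolding convergent_def by blast
  qed
  define f where "f t = lim (\<lambda>k. g k t)" for t
  have flim: "(\<lambda>k. g k t) \<longlonglongrightarrow> f t" for t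
    unfolding f_def using conv[of t] by (simp add: convergent_LIMSEQ_iff)
  have L6: "dist (g k t) (f t) \<le> E k" for k t
  proof -
    have l1: "(\<lambda>k'. dist (g k t) (g k' t)) \<longlonglongrightarrow> dist (g k t) (f t)"
      by (intro tendsto_dist tendsto_const flim)
    have l2: "(\<lambda>k'. E k + E k') \<longlonglongrightarrow> E k"
      using tendsto_add[OF tendsto_const Etend, of "E k"] by simp
    show ?thesis
      by (rule tendsto_le[OF trivial_limit_sequentially l2 l1]) (auto intro: always_eventually L4)
  qed
  have ulim: "uniform_limit UNIV g f sequentially"
    unfolding uniform_limit_sequentially_iff
  proof (intro allI impI)
    fix e :: real assume e: "e > 0"
    obtain K where K: "\<forall>k\<ge>K. E k \<le> e / 2" using Elim[of "e/2"] e by auto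
    show "\<exists>N. \<forall>n\<ge>N. \<forall>x\<in>UNIV. dist (g n x) (f x) < e"
    proof (intro exI[of _ K] allI impI ballI)
      fix n y assume "K \<le> n"
      then have "E n \<le> e / 2" using K by auto
      then show "dist (g n y) (f y) < e" using L6[where k=n and t=y] e by linarith
    qed
  qed
  have fcont: "continuous_on UNIV f"
    by (rule uniform_limit_theorem[OF always_eventually ulim trivial_limit_sequentially])
       (auto intro: gcont)
  show "\<exists>f :: real ^ 's \<Rightarrow> 'a. continuous_on UNIV f \<and>
     (\<forall>e>0. \<exists>N. \<forall>n\<ge>N. \<forall>j. dist (f (dyadic n j)) ((S ^^ n) x j) \<le> e)"
  proof (intro exI[of _ f] conjI allI impI)
    show "continuous_on UNIV f" by (rule fcont)
    fix e :: real assume e: "e > 0"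
    obtain K where K: "\<forall>k\<ge>K. E k \<le> e / 3" using Elim[of "e/3"] e by auto
    obtain N1 where N1: "\<forall>n\<ge>N1. \<forall>j. dist (F K (dyadic n j)) ((T ^^ n) ((S ^^ K) x) j) \<le> e / 3"
      using F(2)[of "e/3" K] e by auto
    show "\<exists>N. \<forall>n\<ge>N. \<forall>j. dist (f (dyadic n j)) ((S ^^ n) x j) \<le> e"
    proof (intro exI[of _ "K + N1"] allI impI)
      fix n j assume n: "K + N1 \<le> n"
      define p where "p = n - K"
      have a: "dist (f (dyadic n j)) (g K (dyadic n j)) \<le> E K"
        using L6[where k=K and t="dyadic n j"] by (simp add: dist_commute)
      have b: "dist (g K (dyadic n j)) ((T ^^ p) ((S ^^ K) x) j) \<le> e / 3"
        using gdy[of K n j] n N1 unfolding p_def by auto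
      have c: "dist ((T ^^ p) ((S ^^ K) x) j) ((S ^^ n) x j) \<le> E K"
        using estp[of p K j] n unfolding p_def by simp
      have "dist (f (dyadic n j)) ((S ^^ n) x j) \<le> dist (f (dyadic n j)) (g K (dyadic n j))
          + dist (g K (dyadic n j)) ((T ^^ p) ((S ^^ K) x) j) + dist ((T ^^ p) ((S ^^ K) x) j) ((S ^^ n) x j)"
        using dist_triangle[of "f (dyadic n j)" "(S ^^ n) x j" "g K (dyadic n j)"]
          dist_triangle[of "g K (dyadic n j)" "(S ^^ n) x j" "(T ^^ p) ((S ^^ K) x) j"] by linarith
      also have "\<dots> \<le> E K + e / 3 + E K" using a b c by linarith
      also have "\<dots> \<le> e" using K by auto
      finally show "dist (f (dyadic n j)) ((S ^^ n) x j) \<le> e" .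
    qed
  qed
qed

end
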